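(* Let $j \in [d]$ and let $\mathcal{Y} = \sum_{k=1}^r \alpha_k \bigcirc_{\ell=1}^d \mathbf{y}^{(\ell)}_k \in \mathbb{C}^{n_1\times\cdots\times n_d}$ be a rank-$r$ tensor in standard form. Let $\epsilon \in (0,1)$ and suppose $\mathbf{A} \in \mathbb{C}^{m\times n_j}$ is an $(\epsilon/4)$-JL embedding into $\mathbb{C}^m$ of the $2r^2 - r$ vectors $$\Big(\bigcup_{1\le h<k\le r}\{\mathbf{y}^{(j)}_k - \mathbf{y}^{(j)}_h,\ \mathbf{y}^{(j)}_k + \mathbf{y}^{(j)}_h,\ \mathbf{y}^{(j)}_k - \mathrm{i}\,\mathbf{y}^{(j)}_h,\ \mathbf{y}^{(j)}_k + \mathrm{i}\,\mathbf{y}^{(j)}_h\}\Big)\cup\{\mathbf{y}^{(j)}_k\}_{k\in[r]} \subset \mathbb{C}^{n_j}.$$ Let $\mathcal{Y}' := \mathcal{Y}\times_j \mathbf{A}$, written in standard form as $$\mathcal{Y}' = \sum_{k=1}^r \alpha'_k \Big( \big(\bigcirc_{\ell<j}\mathbf{y}^{(\ell)}_k\big)\bigcirc \frac{\mathbf{A}\mathbf{y}^{(j)}_k}{\|\mathbf{A}\mathbf{y}^{(j)}_k\|_2}\bigcirc\big(\bigcirc_{\ell>j}\mathbf{y}^{(\ell)}_k\big)\Big),\qquad \alpha'_k = \alpha_k\|\mathbf{A}\mathbf{y}^{(j)}_k\|_2 .$$ Then: (1) $|\alpha'_k - \alpha_k| \leq \epsilon|\alpha_k|/4$ for all $k\in[r]$,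 so that $\|\boldsymbol\alpha'\|_\infty \leq (1+\epsilon/4)\|\boldsymbol\alpha\|_\infty$; (2) $\mu_{\mathcal{Y}',j} \leq \frac{\mu_{\mathcal{Y},j}+\epsilon}{1-\epsilon/4}$, and $\mu_{\mathcal{Y}',\ell} = \mu_{\mathcal{Y},\ell}$ for all $\ell\in[d]\setminus\{j\}$; (3) $\displaystyle \big|\|\mathcal{Y}'\|^2 - \|\mathcal{Y}\|^2\big| \leq \epsilon\Big(1+\sqrt{r(r-1)}\prod_{\ell\neq j}\mu_{\mathcal{Y},\ell}\Big)\|\boldsymbol\alpha\|_2^2 \leq \epsilon\big(1+r\mu_{\mathcal{Y}}^{d-1}\big)\|\boldsymbol\alpha\|_2^2 \leq \epsilon(r+1)\|\boldsymbol\alpha\|_2^2.$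
   Context: Tensors in $\mathbb{C}^{n_1\times\cdots\times n_d}$ have inner product $\langle\mathcal{X},\mathcal{Y}\rangle=\sum\mathcal{X}_{i_1\dots i_d}\overline{\mathcal{Y}_{i_1\dots i_d}}$ and norm $\|\cdot\|$; $\bigcirc$ is the outer product; the $j$-mode product is $(\mathcal{X}\times_j\mathbf{U})_{i_1,\dots,\ell,\dots,i_d}=\sum_{i_j}\mathcal{X}_{i_1,\dots,i_j,\dots,i_d}\mathbf{U}_{\ell,i_j}$; $\mathrm{i}$ is the imaginary unit. A linear map $L$ is an $\epsilon$-JL embedding of a set $S$ if for each $x\in S$, $\|L(x)\|^2=(1+\epsilon_x)\|x\|^2$ for some $\epsilon_x\in(-\epsilon,\epsilon)$. A rank-$r$ tensor in standard form is $\mathcal{Y}=\sum_{k=1}^r\alpha_k\bigcirc_{\ell=1}^d\mathbf{y}^{(\ell)}_k$ with $\|\mathbf{y}^{(\ell)}_k\|_2=1$ for all $\ell,k$; $\boldsymbol\alpha=(\alpha_1,\dots,\alpha_r)$. Relative to this representation, the modewise coherences are $\mu_{\mathcal{Y},\ell}=\max_{k\ne h}|\langle\mathbf{y}^{(\ell)}_k,\mathbf{y}^{(\ell)}_h\rangle|$ and the maximum modewise coherence is $\mu_{\mathcal{Y}}=\max_{\ell\in[d]}\mu_{\mathcal{Y},\ell}$ (for $\mathcal{Y}'$, these are computed from the displayed standard form of $\mathcal{Y}'$). *)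

theory Defs
  imports "HOL-Analysis.Analysis"
begin

text \<open>Conventions: modes are indexed 0..d-1, rank-one terms 0..r-1, vector
 coordinates of mode l are 0..n l - 1.  Vectors in C^n are functions nat => complex
 (only coordinates below n matter), tensors in C^{n_0 x ... x n_{d-1}} are functions
 on multi-indices (nat lists) and only entries in tidx d n matter.\<close>

definition vinner :: "nat \<Rightarrow> (nat \<Rightarrow> complex) \<Rightarrow> (nat \<Rightarrow> complex) \<Rightarrow> complex" where
  "vinner n x y = (\<Sum>i<n. x i * cnj (y i))"

definition vnorm :: "nat \<Rightarrow> (nat \<Rightarrow> complex) \<Rightarrow> real" where
  "vnorm n x = sqrt (\<Sum>i<n. (cmod (x i))\<^sup>2)"

definition matvec :: "nat \<Rightarrow> nat \<Rightarrow> (nat \<Rightarrow> nat \<Rightarrow> complex) \<Rightarrow> (nat \<Rightarrow> complex) \<Rightarrow> (nat \<Rightarrow> complex)" where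
  "matvec m n A x = (\<lambda>a. if a < m then (\<Sum>i<n. A a i * x i) else 0)"

definition JL_embedding :: "real \<Rightarrow> nat \<Rightarrow> nat \<Rightarrow> (nat \<Rightarrow> nat \<Rightarrow> complex) \<Rightarrow> (nat \<Rightarrow> complex) set \<Rightarrow> bool" where
  "JL_embedding eps m n A S \<longleftrightarrow>
     (\<forall>x\<in>S. \<exists>e. - eps < e \<and> e < eps \<and> (vnorm m (matvec m n A x))\<^sup>2 = (1 + e) * (vnorm n x)\<^sup>2)"

definition tidx :: "nat \<Rightarrow> (nat \<Rightarrow> nat) \<Rightarrow> nat list set" where
  "tidx d n = {is. length is = d \<and> (\<forall>l<d. is ! l < n l)}"

definition tnorm :: "nat \<Rightarrow> (nat \<Rightarrow> nat) \<Rightarrow> (nat list \<Rightarrow> complex) \<Rightarrow> real" where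
  "tnorm d n X = sqrt (\<Sum>is\<in>tidx d n. (cmod (X is))\<^sup>2)"

definition cp_tensor :: "nat \<Rightarrow> nat \<Rightarrow> (nat \<Rightarrow> complex) \<Rightarrow> (nat \<Rightarrow> nat \<Rightarrow> nat \<Rightarrow> complex) \<Rightarrow> (nat list \<Rightarrow> complex)" where
  "cp_tensor d r \<alpha> y = (\<lambda>is. \<Sum>k<r. \<alpha> k * (\<Prod>l<d. y l k (is ! l)))"

definition standard_form :: "nat \<Rightarrow> (nat \<Rightarrow> nat) \<Rightarrow> nat \<Rightarrow> (nat \<Rightarrow> nat \<Rightarrow> nat \<Rightarrow> complex) \<Rightarrow> bool" where
  "standard_form d n r y \<longleftrightarrow> (\<forall>l<d. \<forall>k<r. vnorm (n l) (y l k) = 1)"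

text \<open>j-mode product X \<times>_j A, A an (m x n_j) matrix; result lives on tidx d (n(j:=m)).\<close>
definition mode_prod :: "nat \<Rightarrow> (nat \<Rightarrow> nat) \<Rightarrow> nat \<Rightarrow> (nat list \<Rightarrow> complex) \<Rightarrow> (nat \<Rightarrow> nat \<Rightarrow> complex) \<Rightarrow> (nat list \<Rightarrow> complex)" where
  "mode_prod d n j X A = (\<lambda>is. \<Sum>i<n j. X (is[j := i]) * A (is ! j) i)"

text \<open>Modewise coherence mu_l; the maximum over an empty set (r \<le> 1) is taken as 0.\<close>
definition coh :: "(nat \<Rightarrow> nat) \<Rightarrow> nat \<Rightarrow> (nat \<Rightarrow> nat \<Rightarrow> nat \<Rightarrow> complex) \<Rightarrow> nat \<Rightarrow> real" where
  "coh n r y l = Max (insert 0 {cmod (vinner (n l) (y l k) (y l h)) | k h. k < r \<and> h < r \<and> k \<noteq> h})"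

definition max_coh :: "nat \<Rightarrow> (nat \<Rightarrow> nat) \<Rightarrow> nat \<Rightarrow> (nat \<Rightarrow> nat \<Rightarrow> nat \<Rightarrow> complex) \<Rightarrow> real" where
  "max_coh d n r y = Max {coh n r y l | l. l < d}"

definition linf :: "nat \<Rightarrow> (nat \<Rightarrow> complex) \<Rightarrow> real" where
  "linf r \<alpha> = Max (insert 0 {cmod (\<alpha> k) | k. k < r})"

definition l2sq :: "nat \<Rightarrow> (nat \<Rightarrow> complex) \<Rightarrow> real" where
  "l2sq r \<alpha> = (\<Sum>k<r. (cmod (\<alpha> k))\<^sup>2)"

end

theory Submission
  imports Defs
begin

lemma vinner_cnj: "vinner n x y = cnj (vinner n y x)"
  by (simp add: vinner_def cnj_sum mult.commute)

lemma vnorm_sq: "(vnorm n x)\<^sup>2 = (\<Sum>i<n. (cmod (x i))\<^sup>2)"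
  unfolding vnorm_def by (simp add: sum_nonneg)

lemma vnorm_nonneg: "0 \<le> vnorm n x"
  unfolding vnorm_def by (simp add: sum_nonneg)

lemma vinner_self: "vinner n x x = complex_of_real ((vnorm n x)\<^sup>2)"
  unfolding vnorm_sq vinner_def by (simp only: of_real_sum complex_norm_square)

lemma vinner_CS: "cmod (vinner n x y) \<le> vnorm n x * vnorm n y"
proof -
  have "cmod (vinner n x y) \<le> (\<Sum>i<n. cmod (x i) * cmod (y i))"
    unfolding vinner_def by (rule order_trans[OF norm_sum]) (simp add: norm_mult)
  also have "\<dots> = (\<Sum>i<n. \<bar>cmod (x i)\<bar> * \<bar>cmod (y i)\<bar>)" by simp
  also have "\<dots> \<le> L2_set (\<lambda>i. cmod (x i)) {..<n} * L2_set (\<lambda>i. cmod (y i)) {..<n}"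
    by (rule L2_set_mult_ineq)
  also have "\<dots> = vnorm n x * vnorm n y" by (simp add: L2_set_def vnorm_def)
  finally show ?thesis .
qed

lemma vnorm_scale: "vnorm n (\<lambda>i. c * x i) = cmod c * vnorm n x"
proof -
  have "(\<Sum>i<n. (cmod (c * x i))\<^sup>2) = (cmod c)\<^sup>2 * (\<Sum>i<n. (cmod (x i))\<^sup>2)"
    by (simp add: norm_mult power_mult_distrib sum_distrib_left)
  thus ?thesis unfolding vnorm_def by (simp add: real_sqrt_mult)
qed

lemma polar: "vinner n x y = (vinner n (\<lambda>i. x i + y i) (\<lambda>i. x i + y i) - vinner n (\<lambda>i. x i - y i) (\<lambda>i. x i - y i)
   + \<i> * (vinner n (\<lambda>i. x i + \<i> * y i) (\<lambda>i. x i + \<i> * y i) - vinner n (\<lambda>i. x i - \<i> * y i) (\<lambda>i. x i - \<i> * y i))) / 4"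
proof -
  have "\<And>a b::complex. a * cnj b = ((a+b)*cnj(a+b) - (a-b)*cnj(a-b) + \<i> * ((a+\<i>*b)*cnj(a+\<i>*b) - (a-\<i>*b)*cnj(a-\<i>*b)))/4"
    by (simp add: algebra_simps)
  thus ?thesis unfolding vinner_def
    by (simp add: sum_divide_distrib sum_distrib_left sum_subtractf[symmetric] sum.distrib[symmetric] algebra_simps)
qed

lemma parallel1: "vinner n (\<lambda>i. x i + y i) (\<lambda>i. x i + y i) + vinner n (\<lambda>i. x i - y i) (\<lambda>i. x i - y i) = 2 * vinner n x x + 2 * vinner n y y"
  unfolding vinner_def by (simp add: sum_distrib_left sum.distrib[symmetric] algebra_simps)

lemma parallel2: "vinner n (\<lambda>i. x i + \<i> * y i) (\<lambda>i. x i + \<i> * y i) + vinner n (\<lambda>i. x i - \<i> * y i) (\<lambda>i. x i - \<i> * y i) = 2 * vinner n x x + 2 * vinner n y y"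
  unfolding vinner_def by (simp add: sum_distrib_left sum.distrib[symmetric] algebra_simps)

lemma matvec_add: "matvec m n A (\<lambda>i. x i + y i) = (\<lambda>a. matvec m n A x a + matvec m n A y a)"
  by (auto simp: matvec_def sum.distrib algebra_simps)
lemma matvec_diff: "matvec m n A (\<lambda>i. x i - y i) = (\<lambda>a. matvec m n A x a - matvec m n A y a)"
  by (auto simp: matvec_def sum_subtractf algebra_simps)
lemma matvec_addi: "matvec m n A (\<lambda>i. x i + \<i> * y i) = (\<lambda>a. matvec m n A x a + \<i> * matvec m n A y a)"
  by (auto simp: matvec_def sum.distrib sum_distrib_left algebra_simps)
lemma matvec_diffi: "matvec m n A (\<lambda>i. x i - \<i> * y i) = (\<lambda>a. matvec m n A x a - \<i> * matvec m n A y a)"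
  by (auto simp: matvec_def sum_subtractf sum_distrib_left algebra_simps)

lemma re_im_bound: "cmod (complex_of_real p + \<i> * complex_of_real q) \<le> \<bar>p\<bar> + \<bar>q\<bar>"
  by (rule order_trans[OF norm_triangle_ineq]) (simp add: norm_mult)

lemma pol_bound:
  fixes x y :: "nat \<Rightarrow> complex"
  assumes nx: "vnorm n x = 1" and ny: "vnorm n y = 1"
    and e1: "\<bar>e1\<bar> \<le> \<delta>" "(vnorm m (matvec m n A (\<lambda>i. x i + y i)))\<^sup>2 = (1+e1) * (vnorm n (\<lambda>i. x i + y i))\<^sup>2"
    and e2: "\<bar>e2\<bar> \<le> \<delta>" "(vnorm m (matvec m n A (\<lambda>i. x i - y i)))\<^sup>2 = (1+e2) * (vnorm n (\<lambda>i. x i - y i))\<^sup>2"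
    and e3: "\<bar>e3\<bar> \<le> \<delta>" "(vnorm m (matvec m n A (\<lambda>i. x i + \<i> * y i)))\<^sup>2 = (1+e3) * (vnorm n (\<lambda>i. x i + \<i> * y i))\<^sup>2"
    and e4: "\<bar>e4\<bar> \<le> \<delta>" "(vnorm m (matvec m n A (\<lambda>i. x i - \<i> * y i)))\<^sup>2 = (1+e4) * (vnorm n (\<lambda>i. x i - \<i> * y i))\<^sup>2"
  shows "cmod (vinner m (matvec m n A x) (matvec m n A y) - vinner n x y) \<le> 2 * \<delta>"
proof -
  define a1 where "a1 = (vnorm n (\<lambda>i. x i + y i))\<^sup>2"
  define a2 where "a2 = (vnorm n (\<lambda>i. x i - y i))\<^sup>2"
  define a3 where "a3 = (vnorm n (\<lambda>i. x i + \<i> * y i))\<^sup>2"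
  define a4 where "a4 = (vnorm n (\<lambda>i. x i - \<i> * y i))\<^sup>2"
  have G: "vinner n x y = (complex_of_real a1 - complex_of_real a2 + \<i> * (complex_of_real a3 - complex_of_real a4)) / 4"
    unfolding a1_def a2_def a3_def a4_def by (subst polar) (simp only: vinner_self)
  have G': "vinner m (matvec m n A x) (matvec m n A y) = (complex_of_real ((1+e1)*a1) - complex_of_real ((1+e2)*a2) + \<i> * (complex_of_real ((1+e3)*a3) - complex_of_real ((1+e4)*a4))) / 4"
    unfolding a1_def a2_def a3_def a4_def e1(2)[symmetric] e2(2)[symmetric] e3(2)[symmetric] e4(2)[symmetric]
    by (subst polar) (simp only: vinner_self matvec_add[symmetric] matvec_diff[symmetric] matvec_addi[symmetric] matvec_diffi[symmetric])
  have s12: "a1 + a2 = 4"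
  proof -
    have "complex_of_real (a1 + a2) = 2 * vinner n x x + 2 * vinner n y y"
      unfolding a1_def a2_def of_real_add vinner_self[symmetric] by (rule parallel1)
    hence "complex_of_real (a1 + a2) = complex_of_real 4" by (simp add: vinner_self nx ny)
    thus ?thesis by (simp only: of_real_eq_iff)
  qed
  have s34: "a3 + a4 = 4"
  proof -
    have "complex_of_real (a3 + a4) = 2 * vinner n x x + 2 * vinner n y y"
      unfolding a3_def a4_def of_real_add vinner_self[symmetric] by (rule parallel2)
    hence "complex_of_real (a3 + a4) = complex_of_real 4" by (simp add: vinner_self nx ny)
    thus ?thesis by (simp only: of_real_eq_iff)
  qed
  have pos: "0 \<le> a1" "0 \<le> a2" "0 \<le> a3" "0 \<le> a4" unfolding a1_def a2_def a3_def a4_def by auto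
  have D: "vinner m (matvec m n A x) (matvec m n A y) - vinner n x y =
     complex_of_real ((e1*a1 - e2*a2)/4) + \<i> * complex_of_real ((e3*a3 - e4*a4)/4)"
    unfolding G G' by (simp add: field_simps)
  have b1: "\<bar>(e1*a1 - e2*a2)/4\<bar> \<le> \<delta>"
  proof -
    have "\<bar>e1*a1 - e2*a2\<bar> \<le> \<bar>e1\<bar>*a1 + \<bar>e2\<bar>*a2" using pos by (simp add: abs_mult abs_triangle_ineq4 order_trans[OF abs_triangle_ineq4])
    also have "\<dots> \<le> \<delta>*a1 + \<delta>*a2" using pos e1 e2 by (intro add_mono mult_right_mono) auto
    finally have h: "\<bar>e1*a1 - e2*a2\<bar> \<le> \<delta>*a1 + \<delta>*a2" .
    have "\<delta>*a1 + \<delta>*a2 = \<delta> * 4" using s12 by (metis distrib_left)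
    thus ?thesis using h by simp
  qed
  have b2: "\<bar>(e3*a3 - e4*a4)/4\<bar> \<le> \<delta>"
  proof -
    have "\<bar>e3*a3 - e4*a4\<bar> \<le> \<bar>e3\<bar>*a3 + \<bar>e4\<bar>*a4" using pos by (simp add: abs_mult abs_triangle_ineq4 order_trans[OF abs_triangle_ineq4])
    also have "\<dots> \<le> \<delta>*a3 + \<delta>*a4" using pos e3 e4 by (intro add_mono mult_right_mono) auto
    finally have h: "\<bar>e3*a3 - e4*a4\<bar> \<le> \<delta>*a3 + \<delta>*a4" .
    have "\<delta>*a3 + \<delta>*a4 = \<delta> * 4" using s34 by (metis distrib_left)
    thus ?thesis using h by simp
  qed
  show ?thesis unfolding D using re_im_bound b1 b2 by (smt (verit))
qed

lemma tidx_0: "tidx 0 n = {[]}" by (auto simp: tidx_def)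

lemma tidx_Suc: "tidx (Suc d) n = (\<lambda>(xs,i). xs @ [i]) ` (tidx d n \<times> {..<n d})"
proof (intro equalityI subsetI)
  fix ix assume a: "ix \<in> tidx (Suc d) n"
  hence len: "length ix = Suc d" by (simp add: tidx_def)
  then obtain xs i where ixe: "ix = xs @ [i]" by (metis length_Suc_conv_rev rev.simps(2) rev_rev_ident)
  with len have lx: "length xs = d" by simp
  have "xs \<in> tidx d n"
  proof -
    have "\<forall>l<Suc d. ix!l < n l" using a by (simp add: tidx_def)
    hence "\<forall>l<d. xs!l < n l" using lx unfolding ixe
      by (metis (no_types, lifting) less_SucI nth_append_left)
    thus ?thesis using lx by (simp add: tidx_def)
  qed
  moreover have "i < n d" using a lx unfolding tidx_def ixe by (auto dest: spec[of _ d])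
  ultimately show "ix \<in> (\<lambda>(xs,i). xs @ [i]) ` (tidx d n \<times> {..<n d})" using ixe by auto
next
  fix ix assume "ix \<in> (\<lambda>(xs,i). xs @ [i]) ` (tidx d n \<times> {..<n d})"
  then obtain xs i where ixe: "ix = xs @ [i]" and xs: "xs \<in> tidx d n" and i: "i < n d" by auto
  show "ix \<in> tidx (Suc d) n" using xs i unfolding ixe tidx_def
    by (auto simp: nth_append less_Suc_eq)
qed

lemma tidx_finite: "finite (tidx d n)"
  by (induction d) (auto simp: tidx_0 tidx_Suc)

lemma sum_tidx_prod:
  fixes f :: "nat \<Rightarrow> nat \<Rightarrow> 'a::comm_semiring_1"
  shows "(\<Sum>ix\<in>tidx d n. \<Prod>l<d. f l (ix!l)) = (\<Prod>l<d. \<Sum>i<n l. f l i)"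
proof (induction d)
  case 0 thus ?case by (simp add: tidx_0)
next
  case (Suc d)
  have inj: "inj_on (\<lambda>(xs,i). xs @ [i]) (tidx d n \<times> {..<n d})"
    by (auto simp: inj_on_def)
  have "(\<Sum>ix\<in>tidx (Suc d) n. \<Prod>l<Suc d. f l (ix!l))
      = (\<Sum>(xs,i)\<in>tidx d n \<times> {..<n d}. \<Prod>l<Suc d. f l ((xs @ [i])!l))"
    unfolding tidx_Suc by (subst sum.reindex[OF inj]) (simp add: case_prod_unfold)
  also have "\<dots> = (\<Sum>(xs,i)\<in>tidx d n \<times> {..<n d}. (\<Prod>l<d. f l (xs!l)) * f d i)"
  proof (rule sum.cong[OF refl], clarify)
    fix xs i assume "xs \<in> tidx d n"
    hence lx: "length xs = d" by (simp add: tidx_def)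
    show "(\<Prod>l<Suc d. f l ((xs @ [i])!l)) = (\<Prod>l<d. f l (xs!l)) * f d i"
      using lx by (simp add: prod.lessThan_Suc nth_append)
  qed
  also have "\<dots> = (\<Sum>xs\<in>tidx d n. \<Prod>l<d. f l (xs!l)) * (\<Sum>i<n d. f d i)"
    by (simp add: sum_product sum.cartesian_product)
  also have "\<dots> = (\<Prod>l<Suc d. \<Sum>i<n l. f l i)" using Suc by (simp add: prod.lessThan_Suc)
  finally show ?case .
qed

lemma tnorm_cp:
  "complex_of_real ((tnorm d n (cp_tensor d r \<alpha> y))\<^sup>2)
   = (\<Sum>k<r. \<Sum>h<r. \<alpha> k * cnj (\<alpha> h) * (\<Prod>l<d. vinner (n l) (y l k) (y l h)))"
proof -
  have "(tnorm d n (cp_tensor d r \<alpha> y))\<^sup>2 = (\<Sum>ix\<in>tidx d n. (cmod (cp_tensor d r \<alpha> y ix))\<^sup>2)"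
    unfolding tnorm_def by (simp add: sum_nonneg)
  hence "complex_of_real ((tnorm d n (cp_tensor d r \<alpha> y))\<^sup>2)
     = (\<Sum>ix\<in>tidx d n. cp_tensor d r \<alpha> y ix * cnj (cp_tensor d r \<alpha> y ix))"
    by (simp only: of_real_sum complex_norm_square)
  also have "\<dots> = (\<Sum>ix\<in>tidx d n. \<Sum>k<r. \<Sum>h<r. \<alpha> k * cnj (\<alpha> h) * (\<Prod>l<d. y l k (ix!l) * cnj (y l h (ix!l))))"
  proof (rule sum.cong[OF refl])
    fix ix
    have "cp_tensor d r \<alpha> y ix * cnj (cp_tensor d r \<alpha> y ix)
      = (\<Sum>k<r. \<alpha> k * (\<Prod>l<d. y l k (ix!l))) * (\<Sum>h<r. cnj (\<alpha> h) * (\<Prod>l<d. cnj (y l h (ix!l))))"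
      unfolding cp_tensor_def by (simp only: cnj_sum cnj_prod complex_cnj_mult)
    also have "\<dots> = (\<Sum>k<r. \<Sum>h<r. (\<alpha> k * (\<Prod>l<d. y l k (ix!l))) * (cnj (\<alpha> h) * (\<Prod>l<d. cnj (y l h (ix!l)))))"
      by (rule sum_product)
    also have "\<dots> = (\<Sum>k<r. \<Sum>h<r. \<alpha> k * cnj (\<alpha> h) * (\<Prod>l<d. y l k (ix!l) * cnj (y l h (ix!l))))"
    proof -
      have r: "\<And>a P c Q::complex. (a*P)*(c*Q) = a*c*(P*Q)" by (simp add: ac_simps)
      show ?thesis by (simp only: r prod.distrib[symmetric])
    qed
    finally show "cp_tensor d r \<alpha> y ix * cnj (cp_tensor d r \<alpha> y ix) = (\<Sum>k<r. \<Sum>h<r. \<alpha> k * cnj (\<alpha> h) * (\<Prod>l<d. y l k (ix!l) * cnj (y l h (ix!l))))" .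
  qed
  also have "\<dots> = (\<Sum>k<r. \<Sum>h<r. \<alpha> k * cnj (\<alpha> h) * (\<Sum>ix\<in>tidx d n. \<Prod>l<d. y l k (ix!l) * cnj (y l h (ix!l))))"
  proof -
    have "(\<Sum>ix\<in>tidx d n. \<Sum>k<r. \<Sum>h<r. \<alpha> k * cnj (\<alpha> h) * (\<Prod>l<d. y l k (ix!l) * cnj (y l h (ix!l))))
      = (\<Sum>k<r. \<Sum>ix\<in>tidx d n. \<Sum>h<r. \<alpha> k * cnj (\<alpha> h) * (\<Prod>l<d. y l k (ix!l) * cnj (y l h (ix!l))))"
      by (rule sum.swap)
    also have "\<dots> = (\<Sum>k<r. \<Sum>h<r. \<Sum>ix\<in>tidx d n. \<alpha> k * cnj (\<alpha> h) * (\<Prod>l<d. y l k (ix!l) * cnj (y l h (ix!l))))"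
      by (rule sum.cong[OF refl], rule sum.swap)
    also have "\<dots> = (\<Sum>k<r. \<Sum>h<r. \<alpha> k * cnj (\<alpha> h) * (\<Sum>ix\<in>tidx d n. \<Prod>l<d. y l k (ix!l) * cnj (y l h (ix!l))))"
      by (simp only: sum_distrib_left)
    finally show ?thesis .
  qed
  also have "\<dots> = (\<Sum>k<r. \<Sum>h<r. \<alpha> k * cnj (\<alpha> h) * (\<Prod>l<d. vinner (n l) (y l k) (y l h)))"
  proof (intro sum.cong refl)
    fix k h
    have e: "(\<Sum>ix\<in>tidx d n. \<Prod>l<d. y l k (ix!l) * cnj (y l h (ix!l))) = (\<Prod>l<d. vinner (n l) (y l k) (y l h))"
      unfolding vinner_def by (rule sum_tidx_prod[of "\<lambda>l i. y l k i * cnj (y l h i)" d n])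
    show "\<alpha> k * cnj (\<alpha> h) * (\<Sum>ix\<in>tidx d n. \<Prod>l<d. y l k (ix!l) * cnj (y l h (ix!l)))
      = \<alpha> k * cnj (\<alpha> h) * (\<Prod>l<d. vinner (n l) (y l k) (y l h))"
      by (simp only: e)
  qed
  finally show ?thesis .
qed

lemma Max0_le: "finite S \<Longrightarrow> (\<And>x. x \<in> S \<Longrightarrow> x \<le> B) \<Longrightarrow> (0::real) \<le> B \<Longrightarrow> Max (insert 0 S) \<le> B"
  by (simp add: Max_le_iff)

lemma Max0_ge: "finite S \<Longrightarrow> x \<in> S \<Longrightarrow> x \<le> Max (insert (0::real) S)"
  by simp

lemma Max0_nonneg: "finite S \<Longrightarrow> (0::real) \<le> Max (insert 0 S)"
  by simp

lemma coh_finite: "finite {cmod (vinner (n l) (y l k) (y l h)) | k h. k < (r::nat) \<and> h < r \<and> k \<noteq> h}"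
proof (rule finite_subset)
  show "{cmod (vinner (n l) (y l k) (y l h)) | k h. k < r \<and> h < r \<and> k \<noteq> h}
     \<subseteq> (\<lambda>(k,h). cmod (vinner (n l) (y l k) (y l h))) ` ({..<r} \<times> {..<r})" by auto
qed auto

lemma coh_ge: "k < (r::nat) \<Longrightarrow> h < r \<Longrightarrow> k \<noteq> h \<Longrightarrow> cmod (vinner (n l) (y l k) (y l h)) \<le> coh n r y l"
  unfolding coh_def by (rule Max0_ge[OF coh_finite]) blast

lemma coh_nonneg: "0 \<le> coh n r y l"
  unfolding coh_def by (rule Max0_nonneg[OF coh_finite])

lemma coh_le: "(\<And>k h. k < (r::nat) \<Longrightarrow> h < r \<Longrightarrow> k \<noteq> h \<Longrightarrow> cmod (vinner (n l) (y l k) (y l h)) \<le> B) \<Longrightarrow> 0 \<le> B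
  \<Longrightarrow> coh n r y l \<le> B"
  unfolding coh_def by (rule Max0_le[OF coh_finite]) blast+

lemma linf_ge: "k < r \<Longrightarrow> cmod (\<alpha> k) \<le> linf r \<alpha>"
  unfolding linf_def by (rule Max0_ge) auto

lemma linf_le: "(\<And>k. k < r \<Longrightarrow> cmod (\<alpha> k) \<le> B) \<Longrightarrow> 0 \<le> B \<Longrightarrow> linf r \<alpha> \<le> B"
  unfolding linf_def by (rule Max0_le) auto

lemma linf_nonneg: "0 \<le> linf r \<alpha>"
  unfolding linf_def by (rule Max0_nonneg) auto

lemma max_coh_ge: "l < d \<Longrightarrow> coh n r y l \<le> max_coh d n r y"
  unfolding max_coh_def by (rule Max_ge) auto

lemma max_coh_le: "0 < d \<Longrightarrow> (\<And>l. l < d \<Longrightarrow> coh n r y l \<le> B) \<Longrightarrow> max_coh d n r y \<le> B"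
  unfolding max_coh_def by (subst Max_le_iff) auto

lemma JL_get: "JL_embedding \<delta> m n A S \<Longrightarrow> x \<in> S \<Longrightarrow>
   \<exists>e. \<bar>e\<bar> < \<delta> \<and> (vnorm m (matvec m n A x))\<^sup>2 = (1+e)*(vnorm n x)\<^sup>2"
  unfolding JL_embedding_def by force

lemma prod_split_j: "j < (d::nat) \<Longrightarrow> (\<Prod>l<d. f l) = f j * (\<Prod>l\<in>{..<d} - {j}. f l)"
  by (subst prod.remove[of "{..<d}" j]) auto

lemma vinner_div: "vinner n (\<lambda>i. a i / complex_of_real s) (\<lambda>i. b i / complex_of_real t) = vinner n a b / complex_of_real (s * t)"
  unfolding vinner_def by (simp add: sum_divide_distrib)

lemma vnorm_div: "s > 0 \<Longrightarrow> vnorm n (\<lambda>i. a i / complex_of_real s) = vnorm n a / s"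
proof -
  assume s: "s > 0"
  have eq: "(\<lambda>i. a i / complex_of_real s) = (\<lambda>i. complex_of_real (1/s) * a i)" by (simp add: field_simps)
  have "vnorm n (\<lambda>i. a i / complex_of_real s) = cmod (complex_of_real (1/s)) * vnorm n a"
    unfolding eq by (rule vnorm_scale)
  also have "cmod (complex_of_real (1/s)) = 1/s" using s by (simp only: norm_of_real) simp
  finally show ?thesis by simp
qed

lemma sum_offdiag: "(\<Sum>k<r. \<Sum>h<r. if k = h then (x::real) * a k else c * (a k + a h))
   = x * (\<Sum>k<r. a k) + c * (2 * (real r - 1) * (\<Sum>k<r. a k))"
proof -
  have "(\<Sum>k<r. \<Sum>h<r. if k = h then x * a k else c * (a k + a h))
     = (\<Sum>k<r. x * a k + c * ((real r - 1) * a k + ((\<Sum>h<r. a h) - a k)))"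
  proof (rule sum.cong[OF refl])
    fix k assume k: "k \<in> {..<r}"
    have "(\<Sum>h<r. if k = h then x * a k else c * (a k + a h))
       = x * a k + (\<Sum>h\<in>{..<r} - {k}. if k = h then x * a k else c * (a k + a h))"
      using k by (subst sum.remove[of _ k]) auto
    also have "(\<Sum>h\<in>{..<r} - {k}. if k = h then x * a k else c * (a k + a h)) = (\<Sum>h\<in>{..<r} - {k}. c * (a k + a h))"
      by (rule sum.cong) auto
    also have "\<dots> = c * (real (card ({..<r} - {k})) * a k + (\<Sum>h\<in>{..<r} - {k}. a h))"
      by (simp only: sum_distrib_left[symmetric] sum.distrib sum_constant)
    also have "\<dots> = c * ((real r - 1) * a k + ((\<Sum>h<r. a h) - a k))"
      using k by (simp add: sum_diff1 of_nat_diff)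
    finally show "(\<Sum>h<r. if k = h then x * a k else c * (a k + a h)) = x * a k + c * ((real r - 1) * a k + ((\<Sum>h<r. a h) - a k))" .
  qed
  also have "\<dots> = x * (\<Sum>k<r. a k) + c * (2 * (real r - 1) * (\<Sum>k<r. a k))"
    by (simp add: sum.distrib sum_distrib_left sum_subtractf algebra_simps)
  finally show ?thesis .
qed

theorem theorem3:
  fixes d r m j :: nat and n :: "nat \<Rightarrow> nat"
    and \<alpha> :: "nat \<Rightarrow> complex" and y :: "nat \<Rightarrow> nat \<Rightarrow> nat \<Rightarrow> complex"
    and A :: "nat \<Rightarrow> nat \<Rightarrow> complex" and \<epsilon> :: real
  assumes j: "j < d"
    and sf: "standard_form d n r y"
    and eps: "0 < \<epsilon>" "\<epsilon> < 1"
    and JL: "JL_embedding (\<epsilon>/4) m (n j) A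
      ((\<Union>k<r. \<Union>h<k.
          {(\<lambda>i. y j k i - y j h i), (\<lambda>i. y j k i + y j h i),
           (\<lambda>i. y j k i - \<i> * y j h i), (\<lambda>i. y j k i + \<i> * y j h i)})
       \<union> {y j k | k. k < r})"
  defines "Y \<equiv> cp_tensor d r \<alpha> y"
    and "Y' \<equiv> mode_prod d n j (cp_tensor d r \<alpha> y) A"
    and "n' \<equiv> n(j := m)"
    and "\<alpha>' \<equiv> (\<lambda>k. \<alpha> k * complex_of_real (vnorm m (matvec m (n j) A (y j k))))"
    and "y' \<equiv> (\<lambda>l k. if l = j
                then (\<lambda>i. matvec m (n j) A (y j k) i / complex_of_real (vnorm m (matvec m (n j) A (y j k))))
                else y l k)"
  shows "(standard_form d n' r y' \<and> (\<forall>is\<in>tidx d n'. Y' is = cp_tensor d r \<alpha>' y' is))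
    \<and> ((\<forall>k<r. cmod (\<alpha>' k - \<alpha> k) \<le> \<epsilon> * cmod (\<alpha> k) / 4)
         \<and> linf r \<alpha>' \<le> (1 + \<epsilon>/4) * linf r \<alpha>)
    \<and> (coh n' r y' j \<le> (coh n r y j + \<epsilon>) / (1 - \<epsilon>/4)
         \<and> (\<forall>l<d. l \<noteq> j \<longrightarrow> coh n' r y' l = coh n r y l))
    \<and> (\<bar>(tnorm d n' Y')\<^sup>2 - (tnorm d n Y)\<^sup>2\<bar>
           \<le> \<epsilon> * (1 + sqrt (real r * (real r - 1)) * (\<Prod>l\<in>{..<d} - {j}. coh n r y l)) * l2sq r \<alpha>
         \<and> \<epsilon> * (1 + sqrt (real r * (real r - 1)) * (\<Prod>l\<in>{..<d} - {j}. coh n r y l)) * l2sq r \<alpha>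
           \<le> \<epsilon> * (1 + real r * max_coh d n r y ^ (d - 1)) * l2sq r \<alpha>
         \<and> \<epsilon> * (1 + real r * max_coh d n r y ^ (d - 1)) * l2sq r \<alpha> \<le> \<epsilon> * (real r + 1) * l2sq r \<alpha>)"
proof -
  note dY = assms(6) and dY' = assms(7) and dn' = assms(8) and d\<alpha>' = assms(9) and dy' = assms(10)
  define Ay where "Ay = (\<lambda>k. matvec m (n j) A (y j k))"
  define s where "s = (\<lambda>k. vnorm m (Ay k))"
  define y2 where "y2 = (\<lambda>l k. if l = j then Ay k else y l k)"
  have unit: "\<And>l k. l < d \<Longrightarrow> k < r \<Longrightarrow> vnorm (n l) (y l k) = 1"
    using sf by (simp add: standard_form_def)
  have unitj: "\<And>k. k < r \<Longrightarrow> vnorm (n j) (y j k) = 1" using unit j by blast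
  have diag: "\<And>k. k < r \<Longrightarrow> \<exists>e. \<bar>e\<bar> < \<epsilon>/4 \<and> (s k)\<^sup>2 = 1 + e"
  proof -
    fix k assume k: "k < r"
    obtain e where "\<bar>e\<bar> < \<epsilon>/4" "(vnorm m (matvec m (n j) A (y j k)))\<^sup>2 = (1+e)*(vnorm (n j) (y j k))\<^sup>2"
      using JL_get[OF JL, of "y j k"] k by blast
    thus "\<exists>e. \<bar>e\<bar> < \<epsilon>/4 \<and> (s k)\<^sup>2 = 1 + e" using unitj[OF k] by (auto simp: s_def Ay_def)
  qed
  have spos: "\<And>k. k < r \<Longrightarrow> s k > 0"
  proof -
    fix k assume k: "k < r"
    obtain e where e: "\<bar>e\<bar> < \<epsilon>/4" "(s k)\<^sup>2 = 1 + e" using diag[OF k] by blast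
    have "s k \<ge> 0" by (simp add: s_def vnorm_nonneg)
    moreover have "s k \<noteq> 0" using e eps by auto
    ultimately show "s k > 0" by simp
  qed
  have ssq: "\<And>k. k < r \<Longrightarrow> 1 - \<epsilon>/4 \<le> (s k)\<^sup>2 \<and> \<bar>(s k)\<^sup>2 - 1\<bar> \<le> \<epsilon>/4"
    using diag by fastforce
  have s1: "\<And>k. k < r \<Longrightarrow> \<bar>s k - 1\<bar> \<le> \<epsilon>/4"
  proof -
    fix k assume k: "k < r"
    have f: "(s k)\<^sup>2 - 1 = (s k - 1) * (s k + 1)" by (simp add: power2_eq_square algebra_simps)
    have "\<bar>(s k)\<^sup>2 - 1\<bar> = \<bar>s k - 1\<bar> * \<bar>s k + 1\<bar>" unfolding f by (rule abs_mult)
    also have "\<bar>s k + 1\<bar> = s k + 1" using spos[OF k] by simp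
    finally have "\<bar>(s k)\<^sup>2 - 1\<bar> = \<bar>s k - 1\<bar> * (s k + 1)" .
    moreover have "\<bar>s k - 1\<bar> \<le> \<bar>s k - 1\<bar> * (s k + 1)" using spos[OF k]
      by (simp add: mult_le_cancel_left1)
    ultimately show "\<bar>s k - 1\<bar> \<le> \<epsilon>/4" using ssq[OF k] by linarith
  qed
  have sprod: "\<And>k h. k < r \<Longrightarrow> h < r \<Longrightarrow> 1 - \<epsilon>/4 \<le> s k * s h"
  proof -
    fix k h assume k: "k < r" and h: "h < r"
    have a: "1 - \<epsilon>/4 \<le> (s k)\<^sup>2" using ssq[OF k] by blast
    have b: "1 - \<epsilon>/4 \<le> (s h)\<^sup>2" using ssq[OF h] by blast
    have c: "0 \<le> 1 - \<epsilon>/4" using eps by simp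
    have "(1 - \<epsilon>/4) * (1 - \<epsilon>/4) \<le> (s k)\<^sup>2 * (s h)\<^sup>2"
      by (rule mult_mono[OF a b zero_le_power2 c])
    hence "(1 - \<epsilon>/4)\<^sup>2 \<le> (s k)\<^sup>2 * (s h)\<^sup>2" by (simp only: power2_eq_square)
    hence "(1 - \<epsilon>/4)\<^sup>2 \<le> (s k * s h)\<^sup>2" unfolding power_mult_distrib .
    thus "1 - \<epsilon>/4 \<le> s k * s h"
      by (rule power2_le_imp_le) (use spos[OF k] spos[OF h] in simp)
  qed
  have off1: "\<And>k h. k < r \<Longrightarrow> h < k \<Longrightarrow> cmod (vinner m (Ay k) (Ay h) - vinner (n j) (y j k) (y j h)) \<le> \<epsilon>/2"
  proof -
    fix k h assume k: "k < r" and hk: "h < k"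
    have h: "h < r" using k hk by simp
    let ?S = "(\<Union>k<r. \<Union>h<k.
          {(\<lambda>i. y j k i - y j h i), (\<lambda>i. y j k i + y j h i),
           (\<lambda>i. y j k i - \<i> * y j h i), (\<lambda>i. y j k i + \<i> * y j h i)})
       \<union> {y j k | k. k < r}"
    have m1: "(\<lambda>i. y j k i + y j h i) \<in> ?S" using k hk by blast
    have m2: "(\<lambda>i. y j k i - y j h i) \<in> ?S" using k hk by blast
    have m3: "(\<lambda>i. y j k i + \<i> * y j h i) \<in> ?S" using k hk by blast
    have m4: "(\<lambda>i. y j k i - \<i> * y j h i) \<in> ?S" using k hk by blast
    obtain e1 where e1: "\<bar>e1\<bar> < \<epsilon>/4" "(vnorm m (matvec m (n j) A (\<lambda>i. y j k i + y j h i)))\<^sup>2 = (1+e1) * (vnorm (n j) (\<lambda>i. y j k i + y j h i))\<^sup>2"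
      using JL_get[OF JL m1] by blast
    obtain e2 where e2: "\<bar>e2\<bar> < \<epsilon>/4" "(vnorm m (matvec m (n j) A (\<lambda>i. y j k i - y j h i)))\<^sup>2 = (1+e2) * (vnorm (n j) (\<lambda>i. y j k i - y j h i))\<^sup>2"
      using JL_get[OF JL m2] by blast
    obtain e3 where e3: "\<bar>e3\<bar> < \<epsilon>/4" "(vnorm m (matvec m (n j) A (\<lambda>i. y j k i + \<i> * y j h i)))\<^sup>2 = (1+e3) * (vnorm (n j) (\<lambda>i. y j k i + \<i> * y j h i))\<^sup>2"
      using JL_get[OF JL m3] by blast
    obtain e4 where e4: "\<bar>e4\<bar> < \<epsilon>/4" "(vnorm m (matvec m (n j) A (\<lambda>i. y j k i - \<i> * y j h i)))\<^sup>2 = (1+e4) * (vnorm (n j) (\<lambda>i. y j k i - \<i> * y j h i))\<^sup>2"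
      using JL_get[OF JL m4] by blast
    have "cmod (vinner m (matvec m (n j) A (y j k)) (matvec m (n j) A (y j h)) - vinner (n j) (y j k) (y j h)) \<le> 2 * (\<epsilon>/4)"
      by (rule pol_bound[OF unitj[OF k] unitj[OF h] _ e1(2) _ e2(2) _ e3(2) _ e4(2)])
         (use e1(1) e2(1) e3(1) e4(1) in auto)
    thus "cmod (vinner m (Ay k) (Ay h) - vinner (n j) (y j k) (y j h)) \<le> \<epsilon>/2" by (simp add: Ay_def)
  qed
  have off: "\<And>k h. k < r \<Longrightarrow> h < r \<Longrightarrow> k \<noteq> h \<Longrightarrow> cmod (vinner m (Ay k) (Ay h) - vinner (n j) (y j k) (y j h)) \<le> \<epsilon>/2"
  proof -
    fix k h assume k: "k < r" and h: "h < r" and kh: "k \<noteq> h"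
    show "cmod (vinner m (Ay k) (Ay h) - vinner (n j) (y j k) (y j h)) \<le> \<epsilon>/2"
    proof (cases "h < k")
      case True thus ?thesis using off1 k by blast
    next
      case False
      hence "k < h" using kh by simp
      hence b: "cmod (vinner m (Ay h) (Ay k) - vinner (n j) (y j h) (y j k)) \<le> \<epsilon>/2" using off1 h by blast
      have "vinner m (Ay k) (Ay h) - vinner (n j) (y j k) (y j h) = cnj (vinner m (Ay h) (Ay k) - vinner (n j) (y j h) (y j k))"
        by (subst (1 2) vinner_cnj) simp
      thus ?thesis using b by (simp only: complex_mod_cnj)
    qed
  qed
  have y'j: "\<And>k. y' j k = (\<lambda>i. Ay k i / complex_of_real (s k))" unfolding dy' by (simp add: Ay_def s_def)
  have y'l: "\<And>l. l \<noteq> j \<Longrightarrow> y' l = y l" unfolding dy' by (simp add: fun_eq_iff)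
  have n'j: "n' j = m" unfolding dn' by simp
  have n'l: "\<And>l. l \<noteq> j \<Longrightarrow> n' l = n l" unfolding dn' by simp
  have y2j: "y2 j = Ay" by (simp add: y2_def fun_eq_iff)
  have y2l: "\<And>l. l \<noteq> j \<Longrightarrow> y2 l = y l" by (simp add: y2_def fun_eq_iff)
  have \<alpha>'k: "\<And>k. \<alpha>' k = \<alpha> k * complex_of_real (s k)" unfolding d\<alpha>' by (simp add: s_def Ay_def)
  have SF: "standard_form d n' r y'"
    unfolding standard_form_def
  proof (intro allI impI)
    fix l k assume l: "l < d" and k: "k < r"
    show "vnorm (n' l) (y' l k) = 1"
    proof (cases "l = j")
      case True
      have "vnorm m (\<lambda>i. Ay k i / complex_of_real (s k)) = s k / s k"
        using spos[OF k] by (simp add: vnorm_div s_def)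
      thus ?thesis using True spos[OF k] by (simp add: n'j y'j)
    next
      case False thus ?thesis using unit[OF l k] by (simp add: n'l y'l)
    qed
  qed
  define R where "R = (\<lambda>ix k. \<Prod>l\<in>{..<d} - {j}. y l k (ix ! l))"
  have stepA: "\<And>ix. ix \<in> tidx d n' \<Longrightarrow> Y' ix = cp_tensor d r \<alpha> y2 ix"
  proof -
    fix ix assume ix: "ix \<in> tidx d n'"
    have len: "length ix = d" using ix by (simp add: tidx_def)
    have ixj: "ix ! j < m" using ix j n'j unfolding tidx_def by (metis (mono_tags, lifting) mem_Collect_eq)
    have pu: "\<And>k i. (\<Prod>l<d. y l k ((ix[j := i]) ! l)) = y j k i * R ix k"
    proof -
      fix k i
      have "(\<Prod>l<d. y l k ((ix[j := i]) ! l)) = y j k ((ix[j := i]) ! j) * (\<Prod>l\<in>{..<d} - {j}. y l k ((ix[j := i]) ! l))"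
        by (rule prod_split_j[OF j])
      hence "(\<Prod>l<d. y l k ((ix[j := i]) ! l)) = y j k i * (\<Prod>l\<in>{..<d} - {j}. y l k ((ix[j := i]) ! l))"
        using len j by simp
      also have "(\<Prod>l\<in>{..<d} - {j}. y l k ((ix[j := i]) ! l)) = R ix k"
        unfolding R_def by (rule prod.cong) auto
      finally show "(\<Prod>l<d. y l k ((ix[j := i]) ! l)) = y j k i * R ix k" .
    qed
    have "Y' ix = (\<Sum>i<n j. (\<Sum>k<r. \<alpha> k * (y j k i * R ix k)) * A (ix ! j) i)"
      unfolding dY' mode_prod_def cp_tensor_def by (simp only: pu)
    also have "\<dots> = (\<Sum>i<n j. \<Sum>k<r. \<alpha> k * R ix k * (A (ix ! j) i * y j k i))"
      by (simp only: sum_distrib_right) (simp only: mult_ac)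
    also have "\<dots> = (\<Sum>k<r. \<Sum>i<n j. \<alpha> k * R ix k * (A (ix ! j) i * y j k i))"
      by (rule sum.swap)
    also have "\<dots> = (\<Sum>k<r. \<alpha> k * R ix k * Ay k (ix ! j))"
      using ixj by (simp add: sum_distrib_left[symmetric] Ay_def matvec_def)
    also have "\<dots> = cp_tensor d r \<alpha> y2 ix"
    proof -
      have "\<And>k. (\<Prod>l<d. y2 l k (ix ! l)) = Ay k (ix ! j) * R ix k"
      proof -
        fix k
        have "(\<Prod>l<d. y2 l k (ix ! l)) = y2 j k (ix ! j) * (\<Prod>l\<in>{..<d} - {j}. y2 l k (ix ! l))"
          by (rule prod_split_j[OF j])
        also have "(\<Prod>l\<in>{..<d} - {j}. y2 l k (ix ! l)) = R ix k"
          unfolding R_def by (rule prod.cong) (auto simp: y2l)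
        finally show "(\<Prod>l<d. y2 l k (ix ! l)) = Ay k (ix ! j) * R ix k" by (simp add: y2j)
      qed
      thus ?thesis unfolding cp_tensor_def by (simp add: mult_ac)
    qed
    finally show "Y' ix = cp_tensor d r \<alpha> y2 ix" .
  qed
  have stepB: "\<And>ix. cp_tensor d r \<alpha> y2 ix = cp_tensor d r \<alpha>' y' ix"
  proof -
    fix ix
    show "cp_tensor d r \<alpha> y2 ix = cp_tensor d r \<alpha>' y' ix"
      unfolding cp_tensor_def
    proof (rule sum.cong[OF refl])
      fix k assume k: "k \<in> {..<r}"
      have sn: "complex_of_real (s k) \<noteq> 0" using spos[of k] k by simp
      have e1: "(\<Prod>l<d. y2 l k (ix ! l)) = Ay k (ix ! j) * R ix k"
      proof -
        have "(\<Prod>l<d. y2 l k (ix ! l)) = y2 j k (ix ! j) * (\<Prod>l\<in>{..<d} - {j}. y2 l k (ix ! l))"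
          by (rule prod_split_j[OF j])
        also have "(\<Prod>l\<in>{..<d} - {j}. y2 l k (ix ! l)) = R ix k"
          unfolding R_def by (rule prod.cong) (auto simp: y2l)
        finally show ?thesis by (simp add: y2j)
      qed
      have e2: "(\<Prod>l<d. y' l k (ix ! l)) = Ay k (ix ! j) / complex_of_real (s k) * R ix k"
      proof -
        have "(\<Prod>l<d. y' l k (ix ! l)) = y' j k (ix ! j) * (\<Prod>l\<in>{..<d} - {j}. y' l k (ix ! l))"
          by (rule prod_split_j[OF j])
        also have "(\<Prod>l\<in>{..<d} - {j}. y' l k (ix ! l)) = R ix k"
          unfolding R_def by (rule prod.cong) (auto simp: y'l)
        finally show ?thesis by (simp add: y'j)
      qed
      show "\<alpha> k * (\<Prod>l<d. y2 l k (ix ! l)) = \<alpha>' k * (\<Prod>l<d. y' l k (ix ! l))"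
        unfolding e1 e2 \<alpha>'k using sn by (simp add: field_simps)
    qed
  qed
  have part1: "standard_form d n' r y' \<and> (\<forall>ix\<in>tidx d n'. Y' ix = cp_tensor d r \<alpha>' y' ix)"
    using SF stepA stepB by simp
  have sge: "\<And>k. 0 \<le> s k" by (simp add: s_def vnorm_nonneg)
  have part2a: "\<forall>k<r. cmod (\<alpha>' k - \<alpha> k) \<le> \<epsilon> * cmod (\<alpha> k) / 4"
  proof (intro allI impI)
    fix k assume k: "k < r"
    have "\<alpha>' k - \<alpha> k = \<alpha> k * complex_of_real (s k - 1)" by (simp add: \<alpha>'k algebra_simps)
    hence "cmod (\<alpha>' k - \<alpha> k) = cmod (\<alpha> k) * cmod (complex_of_real (s k - 1))" by (simp only: norm_mult)
    also have "\<dots> = cmod (\<alpha> k) * \<bar>s k - 1\<bar>" by (simp only: norm_of_real)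
    also have "\<dots> \<le> cmod (\<alpha> k) * (\<epsilon>/4)" by (rule mult_left_mono[OF s1[OF k]]) simp
    finally show "cmod (\<alpha>' k - \<alpha> k) \<le> \<epsilon> * cmod (\<alpha> k) / 4" by (simp add: mult.commute)
  qed
  have part2b: "linf r \<alpha>' \<le> (1 + \<epsilon>/4) * linf r \<alpha>"
  proof (rule linf_le)
    fix k assume k: "k < r"
    have "cmod (\<alpha>' k) = cmod (\<alpha> k) * s k" using sge[of k] by (simp add: \<alpha>'k norm_mult)
    also have "\<dots> \<le> cmod (\<alpha> k) * (1 + \<epsilon>/4)" using abs_le_D1[OF s1[OF k]] by (intro mult_left_mono) auto
    also have "\<dots> \<le> linf r \<alpha> * (1 + \<epsilon>/4)" using linf_ge[OF k] eps by (intro mult_right_mono) auto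
    finally show "cmod (\<alpha>' k) \<le> (1 + \<epsilon>/4) * linf r \<alpha>" by (simp add: mult_ac)
  next
    show "0 \<le> (1 + \<epsilon>/4) * linf r \<alpha>" using eps linf_nonneg by simp
  qed
  have part3a: "coh n' r y' j \<le> (coh n r y j + \<epsilon>) / (1 - \<epsilon>/4)"
  proof (rule coh_le)
    fix k h assume k: "k < r" and h: "h < r" and kh: "k \<noteq> h"
    have "vinner (n' j) (y' j k) (y' j h) = vinner m (Ay k) (Ay h) / complex_of_real (s k * s h)"
      by (simp add: n'j y'j vinner_div)
    hence eq: "cmod (vinner (n' j) (y' j k) (y' j h)) = cmod (vinner m (Ay k) (Ay h)) / (s k * s h)"
      using sge[of k] sge[of h] by (simp add: norm_divide norm_mult)
    have "cmod (vinner m (Ay k) (Ay h)) \<le> cmod (vinner m (Ay k) (Ay h) - vinner (n j) (y j k) (y j h)) + cmod (vinner (n j) (y j k) (y j h))"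
      using norm_triangle_sub[of "vinner m (Ay k) (Ay h)" "vinner (n j) (y j k) (y j h)"] by linarith
    also have "\<dots> \<le> \<epsilon>/2 + coh n r y j" using off[OF k h kh] coh_ge[OF k h kh, where n=n and y=y and l=j] by simp
    also have "\<dots> \<le> coh n r y j + \<epsilon>" using eps by simp
    finally have num: "cmod (vinner m (Ay k) (Ay h)) \<le> coh n r y j + \<epsilon>" .
    show "cmod (vinner (n' j) (y' j k) (y' j h)) \<le> (coh n r y j + \<epsilon>) / (1 - \<epsilon>/4)"
      unfolding eq by (rule frac_le[OF _ num _ sprod[OF k h]]) (use eps coh_nonneg[of n r y j] in auto)
  next
    show "0 \<le> (coh n r y j + \<epsilon>) / (1 - \<epsilon>/4)" using eps coh_nonneg[of n r y j] by simp
  qed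
  have part3b: "\<forall>l<d. l \<noteq> j \<longrightarrow> coh n' r y' l = coh n r y l"
    by (simp add: coh_def n'l y'l)
  define G' where "G' = (\<lambda>k h. vinner m (Ay k) (Ay h))"
  define G where "G = (\<lambda>k h. vinner (n j) (y j k) (y j h))"
  define P where "P = (\<lambda>k h. \<Prod>l\<in>{..<d} - {j}. vinner (n l) (y l k) (y l h))"
  define Q where "Q = (\<Prod>l\<in>{..<d} - {j}. coh n r y l)"
  define L where "L = l2sq r \<alpha>"
  define a where "a = (\<lambda>k. (cmod (\<alpha> k))\<^sup>2)"
  have L_a: "L = (\<Sum>k<r. a k)" by (simp add: L_def l2sq_def a_def)
  have Lnn: "0 \<le> L" unfolding L_a a_def by (simp add: sum_nonneg)
  have Qnn: "0 \<le> Q" unfolding Q_def by (rule prod_nonneg) (simp add: coh_nonneg)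
  have T'eq: "tnorm d n' Y' = tnorm d n' (cp_tensor d r \<alpha> y2)"
    unfolding tnorm_def using stepA by (simp cong: sum.cong)
  have E1: "complex_of_real ((tnorm d n' Y')\<^sup>2) = (\<Sum>k<r. \<Sum>h<r. \<alpha> k * cnj (\<alpha> h) * (G' k h * P k h))"
    unfolding T'eq tnorm_cp
  proof (intro sum.cong refl arg_cong2[where f="(*)"])
    fix k h
    have "(\<Prod>l<d. vinner (n' l) (y2 l k) (y2 l h)) = vinner (n' j) (y2 j k) (y2 j h) * (\<Prod>l\<in>{..<d} - {j}. vinner (n' l) (y2 l k) (y2 l h))"
      by (rule prod_split_j[OF j])
    also have "(\<Prod>l\<in>{..<d} - {j}. vinner (n' l) (y2 l k) (y2 l h)) = P k h"
      unfolding P_def by (rule prod.cong) (auto simp: n'l y2l)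
    finally show "(\<Prod>l<d. vinner (n' l) (y2 l k) (y2 l h)) = G' k h * P k h"
      by (simp add: G'_def n'j y2j)
  qed
  have E2: "complex_of_real ((tnorm d n Y)\<^sup>2) = (\<Sum>k<r. \<Sum>h<r. \<alpha> k * cnj (\<alpha> h) * (G k h * P k h))"
    unfolding dY tnorm_cp
  proof (intro sum.cong refl arg_cong2[where f="(*)"])
    fix k h
    show "(\<Prod>l<d. vinner (n l) (y l k) (y l h)) = G k h * P k h"
      unfolding G_def P_def by (rule prod_split_j[OF j])
  qed
  have Ediff: "complex_of_real ((tnorm d n' Y')\<^sup>2 - (tnorm d n Y)\<^sup>2) = (\<Sum>k<r. \<Sum>h<r. \<alpha> k * cnj (\<alpha> h) * ((G' k h - G k h) * P k h))"
    unfolding of_real_diff E1 E2 by (simp add: sum_subtractf[symmetric] algebra_simps)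
  have "\<bar>(tnorm d n' Y')\<^sup>2 - (tnorm d n Y)\<^sup>2\<bar> = cmod (complex_of_real ((tnorm d n' Y')\<^sup>2 - (tnorm d n Y)\<^sup>2))"
    by (simp only: norm_of_real)
  also have "\<dots> \<le> (\<Sum>k<r. \<Sum>h<r. cmod (\<alpha> k * cnj (\<alpha> h) * ((G' k h - G k h) * P k h)))"
    unfolding Ediff by (rule order_trans[OF norm_sum sum_mono[OF norm_sum]])
  also have "\<dots> \<le> (\<Sum>k<r. \<Sum>h<r. if k = h then (\<epsilon>/4) * a k else (\<epsilon>/2 * Q / 2) * (a k + a h))"
  proof (intro sum_mono)
    fix k h assume k: "k \<in> {..<r}" and h: "h \<in> {..<r}"
    have k': "k < r" and h': "h < r" using k h by auto
    have cm: "cmod (\<alpha> k * cnj (\<alpha> h) * ((G' k h - G k h) * P k h)) = (cmod (\<alpha> k) * cmod (\<alpha> h)) * (cmod (G' k h - G k h) * cmod (P k h))"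
      by (simp add: norm_mult)
    show "cmod (\<alpha> k * cnj (\<alpha> h) * ((G' k h - G k h) * P k h)) \<le> (if k = h then (\<epsilon>/4) * a k else (\<epsilon>/2 * Q / 2) * (a k + a h))"
    proof (cases "k = h")
      case True
      have Pkk: "P k k = 1" unfolding P_def
        by (rule prod.neutral) (auto simp: vinner_self unit[OF _ k'])
      have "G' k k - G k k = complex_of_real ((s k)\<^sup>2 - 1)"
        by (simp add: G'_def G_def vinner_self unitj[OF k'] s_def)
      hence "cmod (G' k k - G k k) \<le> \<epsilon>/4" using ssq[OF k'] by (simp only: norm_of_real)
      hence "(cmod (\<alpha> k) * cmod (\<alpha> k)) * (cmod (G' k k - G k k) * cmod (P k k)) \<le> (cmod (\<alpha> k) * cmod (\<alpha> k)) * (\<epsilon>/4)"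
        unfolding Pkk by (intro mult_left_mono) auto
      thus ?thesis using True cm by (simp add: a_def power2_eq_square mult_ac)
    next
      case False
      have g: "cmod (G' k h - G k h) \<le> \<epsilon>/2" unfolding G'_def G_def by (rule off[OF k' h' False])
      have p: "cmod (P k h) \<le> Q" unfolding P_def Q_def prod_norm[symmetric]
        by (rule prod_mono) (auto intro: coh_ge[OF k' h' False])
      have ab: "cmod (\<alpha> k) * cmod (\<alpha> h) \<le> (a k + a h) / 2"
        unfolding a_def using sum_squares_bound[of "cmod (\<alpha> k)" "cmod (\<alpha> h)"] by simp
      have "(cmod (\<alpha> k) * cmod (\<alpha> h)) * (cmod (G' k h - G k h) * cmod (P k h)) \<le> ((a k + a h) / 2) * (\<epsilon>/2 * Q)"
        by (rule mult_mono[OF ab mult_mono[OF g p]]) (use eps in \<open>auto simp: a_def\<close>)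
      thus ?thesis using False cm by (simp add: mult_ac)
    qed
  qed
  also have "\<dots> = \<epsilon>/4 * L + (\<epsilon>/2 * Q / 2) * (2 * (real r - 1) * L)"
    unfolding L_a by (rule sum_offdiag)
  also have "\<dots> \<le> \<epsilon> * (1 + sqrt (real r * (real r - 1)) * Q) * L"
  proof -
    have hr: "\<epsilon>/2 * (real r - 1) \<le> \<epsilon> * sqrt (real r * (real r - 1))"
    proof (cases "r = 0")
      case True thus ?thesis using eps by simp
    next
      case False
      hence r1: "0 \<le> real r - 1" by simp
      have "real r - 1 \<le> sqrt (real r * (real r - 1))"
        by (rule real_le_rsqrt) (use r1 in \<open>simp add: power2_eq_square mult_right_mono\<close>)
      hence "\<epsilon> * (real r - 1) \<le> \<epsilon> * sqrt (real r * (real r - 1))" using eps by (intro mult_left_mono) auto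
      moreover have "\<epsilon>/2 * (real r - 1) \<le> \<epsilon> * (real r - 1)" using eps r1 by (intro mult_right_mono) auto
      ultimately show ?thesis by linarith
    qed
    have "(\<epsilon>/2 * Q / 2) * (2 * (real r - 1) * L) = (\<epsilon>/2 * (real r - 1)) * (Q * L)" by (simp add: field_simps)
    also have "\<dots> \<le> (\<epsilon> * sqrt (real r * (real r - 1))) * (Q * L)"
      by (rule mult_right_mono[OF hr]) (use Qnn Lnn in simp)
    finally have x: "(\<epsilon>/2 * Q / 2) * (2 * (real r - 1) * L) \<le> \<epsilon> * sqrt (real r * (real r - 1)) * Q * L" by (simp add: mult_ac)
    have y: "\<epsilon>/4 * L \<le> \<epsilon> * L" using eps Lnn by simp
    have z: "\<epsilon> * (1 + sqrt (real r * (real r - 1)) * Q) * L = \<epsilon> * L + \<epsilon> * sqrt (real r * (real r - 1)) * Q * L"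
      by (simp add: algebra_simps)
    show ?thesis unfolding z using x y by linarith
  qed
  finally have part4a: "\<bar>(tnorm d n' Y')\<^sup>2 - (tnorm d n Y)\<^sup>2\<bar> \<le> \<epsilon> * (1 + sqrt (real r * (real r - 1)) * Q) * L" .
  define \<mu> where "\<mu> = max_coh d n r y"
  have coh_mu: "\<And>l. l < d \<Longrightarrow> coh n r y l \<le> \<mu>" unfolding \<mu>_def by (rule max_coh_ge)
  have mu_nn: "0 \<le> \<mu>" using coh_mu[OF j] coh_nonneg[of n r y j] by linarith
  have mu_le1: "\<mu> \<le> 1" unfolding \<mu>_def
  proof (rule max_coh_le)
    show "0 < d" using j by simp
  next
    fix l assume l: "l < d"
    show "coh n r y l \<le> 1"
    proof (rule coh_le)
      fix k h assume k: "k < r" and h: "h < r"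
      show "cmod (vinner (n l) (y l k) (y l h)) \<le> 1"
        using vinner_CS[of "n l" "y l k" "y l h"] unit[OF l k] unit[OF l h] by simp
    qed simp
  qed
  have sq_r: "sqrt (real r * (real r - 1)) \<le> real r"
    by (rule real_le_lsqrt) (auto simp: power2_eq_square intro: mult_left_mono)
  have Q_mu: "Q \<le> \<mu> ^ (d - 1)"
  proof -
    have "Q \<le> (\<Prod>l\<in>{..<d} - {j}. \<mu>)" unfolding Q_def
      by (rule prod_mono) (auto simp: coh_nonneg coh_mu)
    also have "\<dots> = \<mu> ^ (d - 1)" using j by (simp add: prod_constant)
    finally show ?thesis .
  qed
  have part4b: "\<epsilon> * (1 + sqrt (real r * (real r - 1)) * Q) * L \<le> \<epsilon> * (1 + real r * \<mu> ^ (d - 1)) * L"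
  proof -
    have "sqrt (real r * (real r - 1)) * Q \<le> real r * \<mu> ^ (d - 1)"
      by (rule mult_mono[OF sq_r Q_mu]) (use Qnn in auto)
    thus ?thesis using eps Lnn by (intro mult_right_mono mult_left_mono) auto
  qed
  have part4c: "\<epsilon> * (1 + real r * \<mu> ^ (d - 1)) * L \<le> \<epsilon> * (real r + 1) * L"
  proof -
    have "\<mu> ^ (d - 1) \<le> 1" by (rule power_le_one[OF mu_nn mu_le1])
    hence "real r * \<mu> ^ (d - 1) \<le> real r" by (simp add: mult_left_le)
    thus ?thesis using eps Lnn by (intro mult_right_mono mult_left_mono) auto
  qed
  show ?thesis
    using part1 part2a part2b part3a part3b part4a part4b part4c
    unfolding Q_def L_def \<mu>_def by blast
qed

end
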